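(* The figure-eight knot $4_1$ has tile number $\tau(4_1)=4$; in particular, $4_1$ can be represented on a $1\times 4$ virtual row mosaic.
   Context: Mosaic tiles are the eleven standard unit-square tiles $T_0,\dots,T_{10}$: $T_0$ is blank; $T_1,\dots,T_4$ each contain a single arc joining the midpoints of two adjacent sides; $T_5$ (horizontal) and $T_6$ (vertical) each contain a single straight segment joining midpoints of opposite sides; $T_7,T_8$ each contain two disjoint arcs, each joining midpoints of two adjacent sides; $T_9,T_{10}$ are the two crossing tiles, containing a horizontal and a vertical segment crossing at the center, with the vertical strand over in one and the horizontal strand over in the other. A virtual rectangular mosaic is an $m\times n$ array of such tiles together with a pairing (with orientation) of the $2(m+n)$ boundary unit edges of the array such that the quotient ("closure") is a closed orientable surface $\Sigma_D$ carrying a knot or link diagram $D$ (arcs must meet consistently across identified edges and across adjacent tiles); this represents a virtual knot/link (a knot diagram on a closed orientable surface up to the usual equivalence). The genus of the mosaic is the genus of $\Sigma_D$. A row mosaic is a $1\times n$ virtual rectangular mosaic. The tile number $\tau(K)$ of a virtual knot $K$ is the minimal number of tiles $mn$ of an $m\times n$ virtual rectangular mosaic representing $K$. *)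

theory Defs
  imports Main
begin

text \<open>A (knot) Gauss diagram: a cyclic word of crossing passages, each entry being
  (crossing label, True = over passage / False = under passage), together with a sign
  for each crossing (True = positive crossing).  The sign of a crossing is
  sign det(d_over, d_under) w.r.t. the orientation of the surface.\<close>

type_synonym gword = "(nat \<times> bool) list"
type_synonym gdiag = "gword \<times> (nat \<Rightarrow> bool)"

definition gauss_wf :: "gword \<Rightarrow> bool" where
  "gauss_wf w \<longleftrightarrow> distinct w \<and> (\<forall>a ov. (a, ov) \<in> set w \<longrightarrow> (a, \<not> ov) \<in> set w)"

definition ordpair :: "bool \<Rightarrow> 'a \<Rightarrow> 'a \<Rightarrow> 'a \<times> 'a" where
  "ordpair b x y = (if b then (x, y) else (y, x))"

text \<open>Admissible Reidemeister III configurations: three strand segments, the top one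
  passing over crossings x,y, the middle one under x and over z, the bottom one under y,z.
  The boolean oT/oM/oB records whether the segment meets x/x/y first.  The two parity
  conditions characterise exactly the configurations realised by three oriented lines
  in the oriented plane (with the sign convention above).\<close>

definition r3_ok :: "(nat \<Rightarrow> bool) \<Rightarrow> ((nat \<times> bool) \<times> (nat \<times> bool)) set \<Rightarrow> bool" where
  "r3_ok s S \<longleftrightarrow> (\<exists>x y z oT oM oB. distinct [x, y, z] \<and>
     S = {ordpair oT (x, True) (y, True), ordpair oM (x, False) (z, True),
          ordpair oB (y, False) (z, False)} \<and>
     ((oM \<noteq> oB) = (s x \<noteq> s y)) \<and> ((oT \<noteq> oB) = (s x \<noteq> s z)))"

definition gmove :: "gdiag \<Rightarrow> gdiag \<Rightarrow> bool" where
  "gmove d d' \<longleftrightarrow> gauss_wf (fst d) \<and> gauss_wf (fst d') \<and>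
   ( \<comment> \<open>cyclic rotation of the word\<close>
     (fst d' = rotate1 (fst d) \<and> snd d' = snd d)
   \<or> \<comment> \<open>relabelling of crossings\<close>
     (\<exists>f. inj_on f (fst ` set (fst d)) \<and> fst d' = map (\<lambda>(a, ov). (f a, ov)) (fst d) \<and>
          (\<forall>a\<in>fst ` set (fst d). snd d' (f a) = snd d a))
   \<or> \<comment> \<open>Reidemeister I (removal)\<close>
     (\<exists>u v a ov. fst d = u @ [(a, ov), (a, \<not> ov)] @ v \<and> fst d' = u @ v \<and> snd d' = snd d)
   \<or> \<comment> \<open>Reidemeister II (removal)\<close>
     (\<exists>u1 u2 u3 a b c e ov. fst d = u1 @ [(a, ov), (b, ov)] @ u2 @ [(c, \<not> ov), (e, \<not> ov)] @ u3 \<and>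
          {c, e} = {a, b} \<and> a \<noteq> b \<and> snd d a \<noteq> snd d b \<and>
          fst d' = u1 @ u2 @ u3 \<and> snd d' = snd d)
   \<or> \<comment> \<open>Reidemeister III\<close>
     (\<exists>u1 u2 u3 u4 p1 p2 q1 q2 r1 r2.
          fst d = u1 @ [p1, p2] @ u2 @ [q1, q2] @ u3 @ [r1, r2] @ u4 \<and>
          fst d' = u1 @ [p2, p1] @ u2 @ [q2, q1] @ u3 @ [r2, r1] @ u4 \<and>
          r3_ok (snd d) {(p1, p2), (q1, q2), (r1, r2)} \<and> snd d' = snd d))"

text \<open>Equivalence of Gauss diagrams (= virtual knot equivalence).\<close>
definition gequiv :: "gdiag \<Rightarrow> gdiag \<Rightarrow> bool" where
  "gequiv = equivclp gmove"

text \<open>Figure-eight knot: closure of the braid s1 s2^-1 s1 s2^-1.\<close>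
definition figure_eight :: gdiag where
  "figure_eight =
    ([(1, True), (2, False), (3, True), (1, False), (4, True), (3, False), (2, True), (4, False)],
     (\<lambda>a. a = 1 \<or> a = 4))"

datatype side = N | E | S | W

datatype tile = T0 | T1 | T2 | T3 | T4 | T5 | T6 | T7 | T8 | T9 | T10

text \<open>T1..T4: single arcs N-W, N-E, E-S, S-W; T5 horizontal,
  T6 vertical; T7: arcs N-W and S-E; T8: arcs N-E and S-W; T9 (vertical over) and
  T10 (horizontal over): crossings.\<close>

fun partner :: "tile \<Rightarrow> side \<Rightarrow> side option" where
  "partner T0 _ = None"
| "partner T1 N = Some W" | "partner T1 W = Some N" | "partner T1 _ = None"
| "partner T2 N = Some E" | "partner T2 E = Some N" | "partner T2 _ = None"
| "partner T3 E = Some S" | "partner T3 S = Some E" | "partner T3 _ = None"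
| "partner T4 S = Some W" | "partner T4 W = Some S" | "partner T4 _ = None"
| "partner T5 W = Some E" | "partner T5 E = Some W" | "partner T5 _ = None"
| "partner T6 N = Some S" | "partner T6 S = Some N" | "partner T6 _ = None"
| "partner T7 N = Some W" | "partner T7 W = Some N" | "partner T7 S = Some E" | "partner T7 E = Some S"
| "partner T8 N = Some E" | "partner T8 E = Some N" | "partner T8 S = Some W" | "partner T8 W = Some S"
| "partner T9 N = Some S" | "partner T9 S = Some N" | "partner T9 W = Some E" | "partner T9 E = Some W"
| "partner T10 N = Some S" | "partner T10 S = Some N" | "partner T10 W = Some E" | "partner T10 E = Some W"

text \<open>A half-edge (i, j, d): side d of the tile in row i (rows numbered top to bottom),
  column j.  Tile arrays are M :: nat => nat => tile, M i j for i < m, j < n.\<close>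

type_synonym hedge = "nat \<times> nat \<times> side"

definition boundary_edges :: "nat \<Rightarrow> nat \<Rightarrow> hedge set" where
  "boundary_edges m n = {(i, j, d). i < m \<and> j < n \<and>
     (d = N \<and> i = 0 \<or> d = S \<and> i = m - 1 \<or> d = W \<and> j = 0 \<or> d = E \<and> j = n - 1)}"

definition across :: "nat \<Rightarrow> nat \<Rightarrow> (hedge \<Rightarrow> hedge) \<Rightarrow> hedge \<Rightarrow> hedge" where
  "across m n P h = (if h \<in> boundary_edges m n then P h else
     (case h of (i, j, N) \<Rightarrow> (i - 1, j, S) | (i, j, S) \<Rightarrow> (i + 1, j, N)
              | (i, j, W) \<Rightarrow> (i, j - 1, E) | (i, j, E) \<Rightarrow> (i, j + 1, W)))"

definition has_end :: "(nat \<Rightarrow> nat \<Rightarrow> tile) \<Rightarrow> hedge \<Rightarrow> bool" where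
  "has_end M h = (case h of (i, j, d) \<Rightarrow> partner (M i j) d \<noteq> None)"

text \<open>An m x n virtual rectangular mosaic: P is a fixed-point-free pairing of the
  2(m+n) boundary unit edges, and arcs meet consistently across all edges.  (The gluing
  directions are the orientation-reversing ones, the only ones giving an orientable
  closure.)\<close>
definition virtual_mosaic :: "nat \<Rightarrow> nat \<Rightarrow> (nat \<Rightarrow> nat \<Rightarrow> tile) \<Rightarrow> (hedge \<Rightarrow> hedge) \<Rightarrow> bool" where
  "virtual_mosaic m n M P \<longleftrightarrow> 1 \<le> m \<and> 1 \<le> n \<and>
     (\<forall>e \<in> boundary_edges m n. P e \<in> boundary_edges m n \<and> P e \<noteq> e \<and> P (P e) = e) \<and>
     (\<forall>i < m. \<forall>j < n. \<forall>d. has_end M (i, j, d) = has_end M (across m n P (i, j, d)))"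

definition exit_of :: "(nat \<Rightarrow> nat \<Rightarrow> tile) \<Rightarrow> hedge \<Rightarrow> hedge" where
  "exit_of M h = (case h of (i, j, d) \<Rightarrow> (i, j, the (partner (M i j) d)))"

definition step :: "nat \<Rightarrow> nat \<Rightarrow> (nat \<Rightarrow> nat \<Rightarrow> tile) \<Rightarrow> (hedge \<Rightarrow> hedge) \<Rightarrow> hedge \<Rightarrow> hedge" where
  "step m n M P h = across m n P (exit_of M h)"

text \<open>An oriented traversal of the diagram as a single closed curve (i.e. the diagram is
  a knot diagram): the cyclic list of half-edges through which the curve enters tiles,
  each arc traversed exactly once, and every arc endpoint is visited.\<close>
definition knot_traversal ::
  "nat \<Rightarrow> nat \<Rightarrow> (nat \<Rightarrow> nat \<Rightarrow> tile) \<Rightarrow> (hedge \<Rightarrow> hedge) \<Rightarrow> hedge list \<Rightarrow> bool" where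
  "knot_traversal m n M P hs \<longleftrightarrow> hs \<noteq> [] \<and> distinct hs \<and>
     (\<forall>h \<in> set hs. case h of (i, j, d) \<Rightarrow> i < m \<and> j < n \<and> has_end M h) \<and>
     (\<forall>k < length hs. hs ! ((k + 1) mod length hs) = step m n M P (hs ! k)) \<and>
     (\<forall>i < m. \<forall>j < n. \<forall>d. has_end M (i, j, d) \<longrightarrow>
        (i, j, d) \<in> set hs \<or> (\<exists>h \<in> set hs. exit_of M h = (i, j, d)))"

definition is_crossing :: "tile \<Rightarrow> bool" where
  "is_crossing t \<longleftrightarrow> t = T9 \<or> t = T10"

definition passage :: "nat \<Rightarrow> (nat \<Rightarrow> nat \<Rightarrow> tile) \<Rightarrow> hedge \<Rightarrow> (nat \<times> bool) list" where
  "passage n M h = (case h of (i, j, d) \<Rightarrow>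
     (if M i j = T9 then [(i * n + j, d = N \<or> d = S)]
      else if M i j = T10 then [(i * n + j, d = W \<or> d = E)]
      else []))"

text \<open>Crossing signs, computed in the plane of the rectangle (x to the right, y upward):
  sign = sign det(d_over, d_under).\<close>
definition mosaic_sign :: "nat \<Rightarrow> (nat \<Rightarrow> nat \<Rightarrow> tile) \<Rightarrow> hedge list \<Rightarrow> nat \<Rightarrow> bool" where
  "mosaic_sign n M hs l = (let i = l div n; j = l mod n;
      east = ((i, j, W) \<in> set hs); north = ((i, j, S) \<in> set hs) in
      (if M i j = T10 then east = north else east \<noteq> north))"

definition mosaic_gauss :: "nat \<Rightarrow> (nat \<Rightarrow> nat \<Rightarrow> tile) \<Rightarrow> hedge list \<Rightarrow> gdiag" where
  "mosaic_gauss n M hs = (concat (map (passage n M) hs), mosaic_sign n M hs)"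

definition mosaic_represents ::
  "nat \<Rightarrow> nat \<Rightarrow> (nat \<Rightarrow> nat \<Rightarrow> tile) \<Rightarrow> (hedge \<Rightarrow> hedge) \<Rightarrow> gdiag \<Rightarrow> bool" where
  "mosaic_represents m n M P K \<longleftrightarrow> virtual_mosaic m n M P \<and>
     (\<exists>hs. knot_traversal m n M P hs \<and> gequiv (mosaic_gauss n M hs) K)"

definition tile_number :: "gdiag \<Rightarrow> nat" where
  "tile_number K = (LEAST t. \<exists>m n M P. m * n = t \<and> mosaic_represents m n M P K)"

end

theory Submission
  imports Defs
begin

datatype col = K0 | K1 | K2 | K3 | K4

fun cn :: "col \<Rightarrow> nat" where
  "cn K0 = 0" | "cn K1 = 1" | "cn K2 = 2" | "cn K3 = 3" | "cn K4 = 4"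

definition nc :: "nat \<Rightarrow> col" where
  "nc n = (let r = n mod 5 in if r = 0 then K0 else if r = 1 then K1 else if r = 2 then K2
     else if r = 3 then K3 else K4)"

definition kop :: "col \<Rightarrow> col \<Rightarrow> col" where
  "kop x y = nc (2 * cn y + 4 * cn x)"

lemma kop_idem[simp]: "kop x x = x"
  by (cases x) (simp_all add: kop_def nc_def)

lemma kop_inv[simp]: "kop (kop x y) y = x"
  by (cases x; cases y) (simp_all add: kop_def nc_def)

lemma kop_dist: "kop (kop x y) z = kop (kop x z) (kop y z)"
  by (cases x; cases y; cases z) (simp_all add: kop_def nc_def)

lemma small3: "kop (kop (kop c o1) o2) o3 = c \<Longrightarrow>
   o1 \<in> {c, kop c o1, kop (kop c o1) o2} \<Longrightarrow>
   o2 \<in> {c, kop c o1, kop (kop c o1) o2} \<Longrightarrow>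
   o3 \<in> {c, kop c o1, kop (kop c o1) o2} \<Longrightarrow> o1 = o2 \<and> o2 = o3"
  by (cases c; cases o1; cases o2; cases o3) (simp_all add: kop_def nc_def)


fun st :: "(nat \<Rightarrow> col) \<Rightarrow> col \<Rightarrow> nat \<times> bool \<Rightarrow> col" where
  "st oc c (a, ov) = (if ov then c else kop c (oc a))"

fun okw :: "(nat \<Rightarrow> col) \<Rightarrow> col \<Rightarrow> gword \<Rightarrow> bool" where
  "okw oc c [] = True"
| "okw oc c ((a, ov) # w) = ((ov \<longrightarrow> oc a = c) \<and> okw oc (st oc c (a, ov)) w)"

fun fin :: "(nat \<Rightarrow> col) \<Rightarrow> col \<Rightarrow> gword \<Rightarrow> col" where
  "fin oc c [] = c"
| "fin oc c (x # w) = fin oc (st oc c x) w"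

fun cols :: "(nat \<Rightarrow> col) \<Rightarrow> col \<Rightarrow> gword \<Rightarrow> col set" where
  "cols oc c [] = {c}"
| "cols oc c (x # w) = insert c (cols oc (st oc c x) w)"

lemma okw_app[simp]: "okw oc c (xs @ ys) = (okw oc c xs \<and> okw oc (fin oc c xs) ys)"
  by (induction xs arbitrary: c) auto

lemma fin_app[simp]: "fin oc c (xs @ ys) = fin oc (fin oc c xs) ys"
  by (induction xs arbitrary: c) auto

lemma c_in_cols: "c \<in> cols oc c w"
  by (cases w) auto

lemma cols_app: "cols oc c (xs @ ys) = cols oc c xs \<union> cols oc (fin oc c xs) ys"
  by (induction xs arbitrary: c) (auto simp: c_in_cols)

lemma fin_in_cols: "fin oc c w \<in> cols oc c w"
  by (induction w arbitrary: c) auto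

definition colouring :: "(nat \<Rightarrow> col) \<Rightarrow> col \<Rightarrow> gword \<Rightarrow> bool" where
  "colouring oc c w \<longleftrightarrow> okw oc c w \<and> fin oc c w = c"

definition Inv :: "gword \<Rightarrow> bool" where
  "Inv w \<longleftrightarrow> (\<exists>oc c. colouring oc c w \<and> (\<exists>a\<in>fst ` set w. \<exists>b\<in>fst ` set w. oc a \<noteq> oc b))"

lemma relab:
  assumes "\<forall>x\<in>set w. oc' (f (fst x)) = oc (fst x)"
  shows "okw oc' c (map (\<lambda>(a, ov). (f a, ov)) w) = okw oc c w \<and>
         fin oc' c (map (\<lambda>(a, ov). (f a, ov)) w) = fin oc c w \<and>
         cols oc' c (map (\<lambda>(a, ov). (f a, ov)) w) = cols oc c w"
  using assms
proof (induction w arbitrary: c)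
  case (Cons x w)
  obtain a b where x: "x = (a, b)" by force
  have "oc' (f a) = oc a" using Cons.prems x by auto
  then have "st oc' c (f a, b) = st oc c (a, b)" by simp
  then show ?case using Cons x \<open>oc' (f a) = oc a\<close> by auto
qed simp

lemma congr:
  assumes "\<forall>x\<in>set w. oc' (fst x) = oc (fst x)"
  shows "okw oc' c w = okw oc c w \<and> fin oc' c w = fin oc c w \<and> cols oc' c w = cols oc c w"
  using relab[of w oc' id oc c] assms by (simp add: case_prod_unfold)

lemma over_in_cols: "okw oc c w \<Longrightarrow> (a, True) \<in> set w \<Longrightarrow> oc a \<in> cols oc c w"
  by (induction w arbitrary: c) auto

lemma const_start:
  assumes "okw oc c w" "\<forall>x\<in>set w. oc (fst x) = r" "(a, True) \<in> set w"
  shows "c = r"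
  using assms
proof (induction w arbitrary: c)
  case Nil then show ?case by simp
next
  case (Cons x w)
  obtain b ov where x: "x = (b, ov)" by force
  show ?case
  proof (cases ov)
    case True then show ?thesis using Cons.prems x by auto
  next
    case False
    then have "(a, True) \<in> set w" using Cons.prems x by auto
    then have "kop c r = r" using Cons x False by auto
    then have "kop (kop c r) r = kop r r" by simp
    then show ?thesis by simp
  qed
qed

lemma const_cols:
  assumes "\<forall>x\<in>set w. oc (fst x) = r"
  shows "cols oc r w = {r}"
  using assms
proof (induction w)
  case (Cons x w)
  have "st oc r x = r" using Cons.prems by (cases x) auto
  then show ?case using Cons by simp
qed simp

lemma triv_cols:
  assumes "gauss_wf w" "okw oc c w" "w \<noteq> []" "\<forall>x\<in>set w. oc (fst x) = r"
  shows "cols oc c w = {r}"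
proof -
  obtain a ov where "(a, ov) \<in> set w" using assms(3) by (cases w) auto
  moreover have "(a, \<not> ov) \<in> set w" using assms(1) calculation unfolding gauss_wf_def by blast
  ultimately have "(a, True) \<in> set w" by (cases ov) auto
  then have "c = r" using const_start assms by blast
  then show ?thesis using const_cols assms by blast
qed

lemma inv_rot1: "Inv w \<Longrightarrow> Inv (rotate1 w)"
proof (cases w)
  case Nil then show "Inv w \<Longrightarrow> Inv (rotate1 w)" by simp
next
  case (Cons x xs)
  assume "Inv w"
  then obtain oc c where col: "colouring oc c w" and nt: "\<exists>a\<in>fst ` set w. \<exists>b\<in>fst ` set w. oc a \<noteq> oc b"
    unfolding Inv_def by blast
  have "colouring oc (st oc c x) (xs @ [x])"
    using col Cons by (cases x) (auto simp: colouring_def)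
  then show ?thesis using nt Cons unfolding Inv_def by auto
qed

lemma inv_rot2: "Inv (rotate1 w) \<Longrightarrow> Inv w"
proof (cases w)
  case Nil then show "Inv (rotate1 w) \<Longrightarrow> Inv w" by simp
next
  case (Cons x xs)
  assume "Inv (rotate1 w)"
  then obtain oc c where col: "colouring oc c (xs @ [x])" and nt: "\<exists>a\<in>fst ` set w. \<exists>b\<in>fst ` set w. oc a \<noteq> oc b"
    unfolding Inv_def using Cons by auto
  have "colouring oc (fin oc c xs) (x # xs)"
    using col Cons by (cases x) (auto simp: colouring_def)
  then show ?thesis using nt Cons unfolding Inv_def by auto
qed

lemma inv_relab1:
  assumes "inj_on f (fst ` set w)" "Inv w"
  shows "Inv (map (\<lambda>(a, ov). (f a, ov)) w)"
proof -
  obtain oc c where col: "colouring oc c w" and nt: "\<exists>a\<in>fst ` set w. \<exists>b\<in>fst ` set w. oc a \<noteq> oc b"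
    using assms(2) unfolding Inv_def by blast
  define oc' where "oc' = (\<lambda>b. oc (inv_into (fst ` set w) f b))"
  have h: "\<forall>x\<in>set w. oc' (f (fst x)) = oc (fst x)"
    using assms(1) by (simp add: oc'_def)
  note r = relab[of w oc' f oc c, OF h]
  have c2: "colouring oc' c (map (\<lambda>(a, ov). (f a, ov)) w)"
    using r col unfolding colouring_def by metis
  have im: "fst ` set (map (\<lambda>(a, ov). (f a, ov)) w) = f ` fst ` set w"
    by (simp add: image_image case_prod_unfold)
  obtain x y where xy: "x \<in> fst ` set w" "y \<in> fst ` set w" "oc x \<noteq> oc y" using nt by blast
  have "oc' (f x) = oc x" "oc' (f y) = oc y" using h xy by auto
  then have "oc' (f x) \<noteq> oc' (f y)" "f x \<in> fst ` set (map (\<lambda>(a, ov). (f a, ov)) w)" "f y \<in> fst ` set (map (\<lambda>(a, ov). (f a, ov)) w)"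
    using xy im by auto
  then show ?thesis unfolding Inv_def using c2 by blast
qed
lemma inv_relab2:
  assumes "Inv (map (\<lambda>(a, ov). (f a, ov)) w)"
  shows "Inv w"
proof -
  obtain oc c where col: "colouring oc c (map (\<lambda>(a, ov). (f a, ov)) w)" and
    nt: "\<exists>a\<in>fst ` set (map (\<lambda>(a, ov). (f a, ov)) w). \<exists>b\<in>fst ` set (map (\<lambda>(a, ov). (f a, ov)) w). oc a \<noteq> oc b"
    using assms unfolding Inv_def by blast
  have h: "\<forall>x\<in>set w. oc (f (fst x)) = (oc \<circ> f) (fst x)" by simp
  note r = relab[of w oc f "oc \<circ> f" c, OF h]
  have c2: "colouring (oc \<circ> f) c w"
    using r col unfolding colouring_def by metis
  have im: "fst ` set (map (\<lambda>(a, ov). (f a, ov)) w) = f ` fst ` set w"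
    by (simp add: image_image case_prod_unfold)
  obtain x' y' where "x' \<in> f ` fst ` set w" "y' \<in> f ` fst ` set w" "oc x' \<noteq> oc y'" using nt im by metis
  then obtain x y where xy: "x \<in> fst ` set w" "y \<in> fst ` set w" "oc (f x) \<noteq> oc (f y)" by blast
  then show ?thesis unfolding Inv_def using c2 by (metis comp_apply)
qed

lemma InvI: "colouring oc c w \<Longrightarrow> x \<in> fst ` set w \<Longrightarrow> y \<in> fst ` set w \<Longrightarrow> oc x \<noteq> oc y \<Longrightarrow> Inv w"
  unfolding Inv_def by blast

lemma fin_in_cols_app: "fin oc c xs \<in> cols oc c (xs @ ys)"
  by (simp add: cols_app c_in_cols)

lemma nt_extend:
  assumes wf: "gauss_wf w'" and col: "colouring oc c w'"
    and sub: "fst ` set w \<subseteq> fst ` set w' \<union> A"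
    and A: "\<forall>a\<in>A. oc a \<in> cols oc c w'"
    and nt: "\<exists>a\<in>fst ` set w. \<exists>b\<in>fst ` set w. oc a \<noteq> oc b"
  shows "\<exists>a\<in>fst ` set w'. \<exists>b\<in>fst ` set w'. oc a \<noteq> oc b"
proof (rule ccontr)
  assume H: "\<not> ?thesis"
  have alleq: "\<forall>a\<in>fst ` set w'. \<forall>b\<in>fst ` set w'. oc a = oc b" using H by blast
  obtain r where r: "cols oc c w' = {r}" and r2: "\<forall>x\<in>set w'. oc (fst x) = r"
  proof (cases "w' = []")
    case True
    have "cols oc c w' = {c}" using True by simp
    moreover have "\<forall>x\<in>set w'. oc (fst x) = c" using True by simp
    ultimately show ?thesis using that by blast
  next
    case False
    then obtain x0 where x0: "x0 \<in> set w'" by (cases w') auto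
    have r2: "\<forall>x\<in>set w'. oc (fst x) = oc (fst x0)"
    proof
      fix x assume "x \<in> set w'"
      then show "oc (fst x) = oc (fst x0)" using alleq x0 by blast
    qed
    have "okw oc c w'" using col by (simp add: colouring_def)
    then have "cols oc c w' = {oc (fst x0)}"
      using triv_cols[OF wf _ False r2] by blast
    then show ?thesis using that r2 by blast
  qed
  have "oc a = r" if a: "a \<in> fst ` set w" for a
  proof -
    have "a \<in> fst ` set w' \<or> a \<in> A" using a sub by blast
    then show ?thesis
    proof
      assume "a \<in> fst ` set w'"
      then obtain x where "x \<in> set w'" "a = fst x" by blast
      then show ?thesis using r2 by blast
    next
      assume "a \<in> A"
      then show ?thesis using A r by blast
    qed
  qed
  then show False using nt by blast
qed

lemma mid_r1: "okw oc p [(a, ov), (a, \<not> ov)] \<Longrightarrow> fin oc p [(a, ov), (a, \<not> ov)] = p \<and> oc a = p"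
proof (cases ov)
  case False
  assume "okw oc p [(a, ov), (a, \<not> ov)]"
  then have e: "oc a = kop p (oc a)" using False by simp
  have "oc a = p" by (metis e kop_idem kop_inv)
  then show ?thesis using False by simp
qed simp

lemma inv_r1_1:
  assumes wf': "gauss_wf (u @ v)" and I: "Inv (u @ [(a, ov), (a, \<not> ov)] @ v)"
  shows "Inv (u @ v)"
proof -
  define m where "m = [(a, ov), (a, \<not> ov)]"
  have I': "Inv (u @ m @ v)" using I by (simp only: m_def)
  obtain oc c where col: "colouring oc c (u @ m @ v)"
    and nt: "\<exists>x\<in>fst ` set (u @ m @ v). \<exists>y\<in>fst ` set (u @ m @ v). oc x \<noteq> oc y"
    using I' unfolding Inv_def by blast
  have c1: "okw oc c u" "okw oc (fin oc c u) m" "okw oc (fin oc (fin oc c u) m) v"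
    "fin oc (fin oc (fin oc c u) m) v = c"
    using col unfolding colouring_def by (simp_all only: okw_app fin_app)
  have m: "fin oc (fin oc c u) m = fin oc c u \<and> oc a = fin oc c u"
    using mid_r1 c1(2) unfolding m_def by blast
  have col': "colouring oc c (u @ v)" using c1 m by (simp only: colouring_def okw_app fin_app)
  have lab: "fst ` set (u @ m @ v) \<subseteq> fst ` set (u @ v) \<union> {a}" unfolding m_def by auto
  show ?thesis unfolding Inv_def
  proof (intro exI conjI)
    show "colouring oc c (u @ v)" by fact
    show "\<exists>x\<in>fst ` set (u @ v). \<exists>y\<in>fst ` set (u @ v). oc x \<noteq> oc y"
      apply (rule nt_extend[OF wf' col' lab _ nt])
      using m fin_in_cols_app[of oc c u v] by auto
  qed
qed

lemma inv_r1_2: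
  assumes wf: "gauss_wf (u @ [(a, ov), (a, \<not> ov)] @ v)" and I: "Inv (u @ v)"
  shows "Inv (u @ [(a, ov), (a, \<not> ov)] @ v)"
proof -
  obtain oc c where col: "colouring oc c (u @ v)"
    and nt: "\<exists>x\<in>fst ` set (u @ v). \<exists>y\<in>fst ` set (u @ v). oc x \<noteq> oc y"
    using I unfolding Inv_def by blast
  have na: "a \<notin> fst ` set (u @ v)"
  proof
    assume "a \<in> fst ` set (u @ v)"
    then obtain b where b: "(a, b) \<in> set (u @ v)" by force
    have d: "distinct (u @ [(a, ov), (a, \<not> ov)] @ v)" using wf unfolding gauss_wf_def by blast
    have "(a, b) \<in> set [(a, ov), (a, \<not> ov)]" by (cases b; cases ov) simp_all
    then show False using b d by auto
  qed
  define p where "p = fin oc c u"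
  define oc' where "oc' = oc(a := p)"
  define m where "m = [(a, ov), (a, \<not> ov)]"
  have e: "\<forall>x\<in>set u. oc' (fst x) = oc (fst x)" "\<forall>x\<in>set v. oc' (fst x) = oc (fst x)"
    using na by (auto simp: oc'_def)
  have u: "okw oc' c u = okw oc c u" "fin oc' c u = p" using congr[OF e(1), of c] unfolding p_def by blast+
  have v: "okw oc' p v = okw oc p v" "fin oc' p v = fin oc p v" using congr[OF e(2), of p] by blast+
  have mm: "okw oc' p m \<and> fin oc' p m = p" unfolding m_def oc'_def by (cases ov) simp_all
  have c1: "okw oc c u" "okw oc p v" "fin oc p v = c"
    using col unfolding colouring_def p_def by (simp_all only: okw_app fin_app)
  have col': "colouring oc' c (u @ m @ v)"
    unfolding colouring_def by (simp only: okw_app fin_app u v mm[THEN conjunct1] mm[THEN conjunct2] c1 simp_thms)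
  obtain x y where xy: "x \<in> fst ` set (u @ v)" "y \<in> fst ` set (u @ v)" "oc x \<noteq> oc y"
    using nt by blast
  have "x \<noteq> a" "y \<noteq> a" using xy na by auto
  then have "oc' x \<noteq> oc' y" using xy by (simp add: oc'_def)
  moreover have "fst ` set (u @ v) \<subseteq> fst ` set (u @ m @ v)" by auto
  ultimately have "Inv (u @ m @ v)" using InvI[OF col'] xy by blast
  then show ?thesis by (simp only: m_def)
qed

lemma mid_r2:
  assumes ab: "{a2, b2} = {a, b}"
    and o1: "okw oc p [(a, ov), (b, ov)]" and o2: "okw oc q [(a2, \<not> ov), (b2, \<not> ov)]"
  shows "fin oc p [(a, ov), (b, ov)] = p \<and> fin oc q [(a2, \<not> ov), (b2, \<not> ov)] = q \<and>
         oc a = (if ov then p else q) \<and> oc b = (if ov then p else q)"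
proof (cases ov)
  case True
  have "oc a = p" "oc b = p" using o1 True by simp_all
  moreover have "oc a2 = p" "oc b2 = p" using ab calculation by (metis doubleton_eq_iff)+
  ultimately show ?thesis using True by simp
next
  case False
  have "oc a2 = q" "oc b2 = q" using o2 False by simp_all
  moreover have "oc a = q" "oc b = q" using ab calculation by (metis doubleton_eq_iff)+
  ultimately show ?thesis using False by simp
qed

lemma inv_r2_1:
  assumes wf': "gauss_wf (u1 @ u2 @ u3)" and ab: "{a2, b2} = {a, b}"
    and I: "Inv (u1 @ [(a, ov), (b, ov)] @ u2 @ [(a2, \<not> ov), (b2, \<not> ov)] @ u3)"
  shows "Inv (u1 @ u2 @ u3)"
proof -
  define m1 where "m1 = [(a, ov), (b, ov)]"
  define m2 where "m2 = [(a2, \<not> ov), (b2, \<not> ov)]"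
  have I': "Inv (u1 @ m1 @ u2 @ m2 @ u3)" using I by (simp only: m1_def m2_def)
  obtain oc c where col: "colouring oc c (u1 @ m1 @ u2 @ m2 @ u3)"
    and nt: "\<exists>x\<in>fst ` set (u1 @ m1 @ u2 @ m2 @ u3). \<exists>y\<in>fst ` set (u1 @ m1 @ u2 @ m2 @ u3). oc x \<noteq> oc y"
    using I' unfolding Inv_def by blast
  define p where "p = fin oc c u1"
  have c1: "okw oc c u1" "okw oc p m1" "okw oc (fin oc p m1) u2"
    using col unfolding colouring_def p_def by (simp_all only: okw_app fin_app)
  define q where "q = fin oc (fin oc p m1) u2"
  have c2: "okw oc q m2" "okw oc (fin oc q m2) u3" "fin oc (fin oc q m2) u3 = c"
    using col unfolding colouring_def p_def q_def by (simp_all only: okw_app fin_app)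
  have m: "fin oc p m1 = p \<and> fin oc q m2 = q \<and> oc a = (if ov then p else q) \<and> oc b = (if ov then p else q)"
    using mid_r2[OF ab] c1(2) c2(1) unfolding m1_def m2_def by blast
  have q2: "q = fin oc p u2" using m q_def by simp
  have col': "colouring oc c (u1 @ u2 @ u3)"
    using c1 c2 m q2 unfolding colouring_def p_def by (simp only: okw_app fin_app simp_thms)
  have lab: "fst ` set (u1 @ m1 @ u2 @ m2 @ u3) \<subseteq> fst ` set (u1 @ u2 @ u3) \<union> {a, b}"
    using ab unfolding m1_def m2_def by auto
  have pc: "p \<in> cols oc c (u1 @ u2 @ u3)" using fin_in_cols_app[of oc c u1 "u2 @ u3"] p_def by simp
  have qc: "q \<in> cols oc c (u1 @ u2 @ u3)"
    using fin_in_cols_app[of oc c "u1 @ u2" u3] q2 p_def by simp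
  have A: "\<forall>x\<in>{a, b}. oc x \<in> cols oc c (u1 @ u2 @ u3)"
    using m pc qc by (cases ov) simp_all
  obtain x y where "x \<in> fst ` set (u1 @ u2 @ u3)" "y \<in> fst ` set (u1 @ u2 @ u3)" "oc x \<noteq> oc y"
    using nt_extend[OF wf' col' lab A nt] by blast
  then show ?thesis using InvI[OF col'] by blast
qed

lemma inv_r2_2:
  assumes wf: "gauss_wf (u1 @ [(a, ov), (b, ov)] @ u2 @ [(a2, \<not> ov), (b2, \<not> ov)] @ u3)"
    and ab: "{a2, b2} = {a, b}"
    and I: "Inv (u1 @ u2 @ u3)"
  shows "Inv (u1 @ [(a, ov), (b, ov)] @ u2 @ [(a2, \<not> ov), (b2, \<not> ov)] @ u3)"
proof -
  define m1 where "m1 = [(a, ov), (b, ov)]"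
  define m2 where "m2 = [(a2, \<not> ov), (b2, \<not> ov)]"
  obtain oc c where col: "colouring oc c (u1 @ u2 @ u3)"
    and nt: "\<exists>x\<in>fst ` set (u1 @ u2 @ u3). \<exists>y\<in>fst ` set (u1 @ u2 @ u3). oc x \<noteq> oc y"
    using I unfolding Inv_def by blast
  have d: "distinct (u1 @ m1 @ u2 @ m2 @ u3)" using wf unfolding gauss_wf_def m1_def m2_def by blast
  have na: "z \<notin> fst ` set (u1 @ u2 @ u3)" if z: "z \<in> {a, b}" for z
  proof
    assume "z \<in> fst ` set (u1 @ u2 @ u3)"
    then obtain t where t: "(z, t) \<in> set (u1 @ u2 @ u3)" by force
    have "(z, t) \<in> set m1 \<union> set m2" using z ab unfolding m1_def m2_def
      by (cases t; cases ov) (auto simp: doubleton_eq_iff)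
    then show False using t d by auto
  qed
  define p where "p = fin oc c u1"
  define q where "q = fin oc p u2"
  define r where "r = (if ov then p else q)"
  define oc' where "oc' = oc(a := r, b := r)"
  have e: "\<forall>x\<in>set u1. oc' (fst x) = oc (fst x)" "\<forall>x\<in>set u2. oc' (fst x) = oc (fst x)"
     "\<forall>x\<in>set u3. oc' (fst x) = oc (fst x)"
    using na unfolding oc'_def by force+
  have c1: "okw oc c u1" "okw oc p u2" "okw oc q u3" "fin oc q u3 = c"
    using col unfolding colouring_def p_def q_def by (simp_all only: okw_app fin_app)
  have u1: "okw oc' c u1" "fin oc' c u1 = p" using congr[OF e(1), of c] c1 unfolding p_def by blast+
  have u2: "okw oc' p u2" "fin oc' p u2 = q" using congr[OF e(2), of p] c1 unfolding q_def by blast+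
  have u3: "okw oc' q u3" "fin oc' q u3 = c" using congr[OF e(3), of q] c1 by blast+
  have oa: "oc' a = r" "oc' b = r" unfolding oc'_def by simp_all
  then have oa2: "oc' a2 = r" "oc' b2 = r" using ab by (metis doubleton_eq_iff)+
  have mm1: "okw oc' p m1" "fin oc' p m1 = p" unfolding m1_def using oa r_def by (cases ov; simp)+
  have mm2: "okw oc' q m2" "fin oc' q m2 = q" unfolding m2_def using oa2 r_def by (cases ov; simp)+
  have col': "colouring oc' c (u1 @ m1 @ u2 @ m2 @ u3)"
    unfolding colouring_def by (simp only: okw_app fin_app u1 u2 u3 mm1 mm2 simp_thms)
  obtain x y where xy: "x \<in> fst ` set (u1 @ u2 @ u3)" "y \<in> fst ` set (u1 @ u2 @ u3)" "oc x \<noteq> oc y"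
    using nt by blast
  have "x \<notin> {a, b}" "y \<notin> {a, b}" using xy na by blast+
  then have "oc' x \<noteq> oc' y" using xy by (simp add: oc'_def)
  moreover have "fst ` set (u1 @ u2 @ u3) \<subseteq> fst ` set (u1 @ m1 @ u2 @ m2 @ u3)" by auto
  ultimately have "Inv (u1 @ m1 @ u2 @ m2 @ u3)" using InvI[OF col'] xy by blast
  then show ?thesis by (simp only: m1_def m2_def)
qed

lemma kL1: "kop (kop b (kop z t)) t = kop (kop b t) z"
  by (metis kop_dist kop_inv)
lemma kL2: "kop (kop b t) (kop z t) = kop (kop b z) t"
  by (metis kop_dist)

lemma seg:
  assumes mem: "(s1, s2) \<in> {ordpair oT (x, True) (y, True), ordpair oM (x, False) (z, True),
                              ordpair oB (y, False) (z, False)}"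
    and xz: "x \<noteq> z" and yz: "y \<noteq> z" and t: "oc y = oc x"
    and oc': "oc' = oc(z := kop (oc z) (oc x))"
    and ok: "okw oc p [s1, s2]"
  shows "okw oc' p [s2, s1] \<and> fin oc' p [s2, s1] = fin oc p [s1, s2]"
proof -
  have o': "oc' x = oc x" "oc' y = oc x" "oc' z = kop (oc z) (oc x)" using oc' xz yz t by simp_all
  have "(s1, s2) = ((x, True), (y, True)) \<or> (s1, s2) = ((y, True), (x, True)) \<or>
        (s1, s2) = ((x, False), (z, True)) \<or> (s1, s2) = ((z, True), (x, False)) \<or>
        (s1, s2) = ((y, False), (z, False)) \<or> (s1, s2) = ((z, False), (y, False))"
    using mem unfolding ordpair_def by (auto split: if_splits)
  then show ?thesis
  proof (elim disjE)
    assume "(s1, s2) = ((x, True), (y, True))" then show ?thesis using ok o' t by auto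
  next
    assume "(s1, s2) = ((y, True), (x, True))" then show ?thesis using ok o' t by auto
  next
    assume "(s1, s2) = ((x, False), (z, True))" then show ?thesis using ok o' t by auto
  next
    assume "(s1, s2) = ((z, True), (x, False))" then show ?thesis using ok o' t by auto
  next
    assume "(s1, s2) = ((y, False), (z, False))" then show ?thesis using ok o' t by (auto simp: kL1)
  next
    assume "(s1, s2) = ((z, False), (y, False))" then show ?thesis using ok o' t by (auto simp: kL2)
  qed
qed


lemma r3gen:
  assumes d: "distinct (u1 @ [P1, P2] @ u2 @ [Q1, Q2] @ u3 @ [R1, R2] @ u4)"
    and dx: "distinct [x, y, z]"
    and S: "{(P1, P2), (Q1, Q2), (R1, R2)} = {ordpair oT (x, True) (y, True),
              ordpair oM (x, False) (z, True), ordpair oB (y, False) (z, False)}"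
    and I: "Inv (u1 @ [P1, P2] @ u2 @ [Q1, Q2] @ u3 @ [R1, R2] @ u4)"
  shows "Inv (u1 @ [P2, P1] @ u2 @ [Q2, Q1] @ u3 @ [R2, R1] @ u4)"
proof -
  let ?SS = "{ordpair oT (x, True) (y, True), ordpair oM (x, False) (z, True), ordpair oB (y, False) (z, False)}"
  obtain oc c where col: "colouring oc c (u1 @ [P1, P2] @ u2 @ [Q1, Q2] @ u3 @ [R1, R2] @ u4)"
    and nt: "\<exists>a\<in>fst ` set (u1 @ [P1, P2] @ u2 @ [Q1, Q2] @ u3 @ [R1, R2] @ u4).
             \<exists>b\<in>fst ` set (u1 @ [P1, P2] @ u2 @ [Q1, Q2] @ u3 @ [R1, R2] @ u4). oc a \<noteq> oc b"
    using I unfolding Inv_def by blast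
  have mP: "(P1, P2) \<in> ?SS" and mQ: "(Q1, Q2) \<in> ?SS" and mR: "(R1, R2) \<in> ?SS" using S by blast+
  have xz: "x \<noteq> z" and yz: "y \<noteq> z" using dx by auto
  define p1 where "p1 = fin oc c u1"
  define p1' where "p1' = fin oc p1 [P1, P2]"
  define p2 where "p2 = fin oc p1' u2"
  define p2' where "p2' = fin oc p2 [Q1, Q2]"
  define p3 where "p3 = fin oc p2' u3"
  define p3' where "p3' = fin oc p3 [R1, R2]"
  have c1: "okw oc c u1" "okw oc p1 [P1, P2]" "okw oc p1' u2" "okw oc p2 [Q1, Q2]"
    "okw oc p2' u3" "okw oc p3 [R1, R2]" "okw oc p3' u4" "fin oc p3' u4 = c"
    using col unfolding colouring_def p1_def p1'_def p2_def p2'_def p3_def p3'_def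
    by (simp_all only: okw_app fin_app)
  have top: "oc y = oc x"
  proof -
    have "ordpair oT (x, True) (y, True) \<in> {(P1, P2), (Q1, Q2), (R1, R2)}" using S by blast
    then have "ordpair oT (x, True) (y, True) = (P1, P2) \<or> ordpair oT (x, True) (y, True) = (Q1, Q2) \<or>
               ordpair oT (x, True) (y, True) = (R1, R2)" by blast
    then obtain s where ok: "okw oc s [fst (ordpair oT (x, True) (y, True)), snd (ordpair oT (x, True) (y, True))]"
    proof (elim disjE)
      assume "ordpair oT (x, True) (y, True) = (P1, P2)" then show ?thesis using that c1(2) by simp
    next
      assume "ordpair oT (x, True) (y, True) = (Q1, Q2)" then show ?thesis using that c1(4) by simp
    next
      assume "ordpair oT (x, True) (y, True) = (R1, R2)" then show ?thesis using that c1(6) by simp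
    qed
    show ?thesis using ok unfolding ordpair_def by (cases oT) auto
  qed
  define oc' where "oc' = oc(z := kop (oc z) (oc x))"
  have zin: "(z, True) \<in> set [P1, P2, Q1, Q2, R1, R2]" "(z, False) \<in> set [P1, P2, Q1, Q2, R1, R2]"
  proof -
    have "ordpair oM (x, False) (z, True) \<in> {(P1, P2), (Q1, Q2), (R1, R2)}"
         "ordpair oB (y, False) (z, False) \<in> {(P1, P2), (Q1, Q2), (R1, R2)}" using S by blast+
    then show "(z, True) \<in> set [P1, P2, Q1, Q2, R1, R2]" "(z, False) \<in> set [P1, P2, Q1, Q2, R1, R2]"
      unfolding ordpair_def by (auto split: if_splits)
  qed
  have xin: "(x, True) \<in> set [P1, P2, Q1, Q2, R1, R2]"
  proof -
    have "ordpair oT (x, True) (y, True) \<in> {(P1, P2), (Q1, Q2), (R1, R2)}" using S by blast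
    then show ?thesis unfolding ordpair_def by (auto split: if_splits)
  qed
  have disj: "set u1 \<inter> set [P1, P2, Q1, Q2, R1, R2] = {}" "set u2 \<inter> set [P1, P2, Q1, Q2, R1, R2] = {}"
    "set u3 \<inter> set [P1, P2, Q1, Q2, R1, R2] = {}" "set u4 \<inter> set [P1, P2, Q1, Q2, R1, R2] = {}"
    using d by auto
  have nz: "\<forall>v\<in>set u. fst v \<noteq> z" if "set u \<inter> set [P1, P2, Q1, Q2, R1, R2] = {}" for u
  proof
    fix v assume v: "v \<in> set u"
    show "fst v \<noteq> z"
    proof
      assume "fst v = z"
      then have "v = (z, True) \<or> v = (z, False)" by (cases v; cases "snd v") auto
      then show False using v zin that by blast
    qed
  qed
  have e: "\<forall>v\<in>set u1. oc' (fst v) = oc (fst v)" "\<forall>v\<in>set u2. oc' (fst v) = oc (fst v)"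
     "\<forall>v\<in>set u3. oc' (fst v) = oc (fst v)" "\<forall>v\<in>set u4. oc' (fst v) = oc (fst v)"
    using nz[OF disj(1)] nz[OF disj(2)] nz[OF disj(3)] nz[OF disj(4)] unfolding oc'_def by simp_all
  note sg = seg[OF _ xz yz top oc'_def]
  have s1: "okw oc' p1 [P2, P1]" "fin oc' p1 [P2, P1] = p1'" using sg[OF mP c1(2)] p1'_def by simp_all
  have s2: "okw oc' p2 [Q2, Q1]" "fin oc' p2 [Q2, Q1] = p2'" using sg[OF mQ c1(4)] p2'_def by simp_all
  have s3: "okw oc' p3 [R2, R1]" "fin oc' p3 [R2, R1] = p3'" using sg[OF mR c1(6)] p3'_def by simp_all
  have u1: "okw oc' c u1" "fin oc' c u1 = p1" using congr[OF e(1), of c] c1 p1_def by simp_all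
  have u2: "okw oc' p1' u2" "fin oc' p1' u2 = p2" using congr[OF e(2), of p1'] c1 p2_def by simp_all
  have u3: "okw oc' p2' u3" "fin oc' p2' u3 = p3" using congr[OF e(3), of p2'] c1 p3_def by simp_all
  have u4: "okw oc' p3' u4" "fin oc' p3' u4 = c" using congr[OF e(4), of p3'] c1 by simp_all
  have col': "colouring oc' c (u1 @ [P2, P1] @ u2 @ [Q2, Q1] @ u3 @ [R2, R1] @ u4)"
    unfolding colouring_def by (simp only: okw_app fin_app u1 u2 u3 u4 s1 s2 s3 simp_thms)
  have labs: "fst ` set (u1 @ [P2, P1] @ u2 @ [Q2, Q1] @ u3 @ [R2, R1] @ u4) =
              fst ` set (u1 @ [P1, P2] @ u2 @ [Q1, Q2] @ u3 @ [R1, R2] @ u4)" by auto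
  have xl: "x \<in> fst ` set (u1 @ [P2, P1] @ u2 @ [Q2, Q1] @ u3 @ [R2, R1] @ u4)"
    using xin by force
  have zl: "z \<in> fst ` set (u1 @ [P2, P1] @ u2 @ [Q2, Q1] @ u3 @ [R2, R1] @ u4)"
    using zin by force
  show ?thesis
  proof (cases "oc' z = oc' x")
    case False
    then show ?thesis using InvI[OF col' zl xl] by blast
  next
    case True
    then have "kop (oc z) (oc x) = oc x" using xz unfolding oc'_def by simp
    then have "kop (kop (oc z) (oc x)) (oc x) = kop (oc x) (oc x)" by simp
    then have "oc z = oc x" by simp
    then have "oc' = oc" unfolding oc'_def by (metis fun_upd_idem kop_idem)
    obtain a b where ab: "a \<in> fst ` set (u1 @ [P1, P2] @ u2 @ [Q1, Q2] @ u3 @ [R1, R2] @ u4)"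
      "b \<in> fst ` set (u1 @ [P1, P2] @ u2 @ [Q1, Q2] @ u3 @ [R1, R2] @ u4)" "oc a \<noteq> oc b" using nt by blast
    have "a \<in> fst ` set (u1 @ [P2, P1] @ u2 @ [Q2, Q1] @ u3 @ [R2, R1] @ u4)"
         "b \<in> fst ` set (u1 @ [P2, P1] @ u2 @ [Q2, Q1] @ u3 @ [R2, R1] @ u4)" using ab(1,2) labs by simp_all
    moreover have "oc' a \<noteq> oc' b" using ab(3) \<open>oc' = oc\<close> by simp
    ultimately show ?thesis using InvI[OF col'] by blast
  qed
qed

lemma swap_ordpair: "prod.swap (ordpair b u v) = ordpair (\<not> b) u v"
  by (simp add: ordpair_def)

lemma gmove_inv:
  assumes g: "gmove d d'"
  shows "Inv (fst d) = Inv (fst d')"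
proof -
  have wf: "gauss_wf (fst d)" and wf': "gauss_wf (fst d')" using g unfolding gmove_def by blast+
  have "(fst d' = rotate1 (fst d) \<and> snd d' = snd d)
   \<or> (\<exists>f. inj_on f (fst ` set (fst d)) \<and> fst d' = map (\<lambda>(a, ov). (f a, ov)) (fst d) \<and>
          (\<forall>a\<in>fst ` set (fst d). snd d' (f a) = snd d a))
   \<or> (\<exists>u v a ov. fst d = u @ [(a, ov), (a, \<not> ov)] @ v \<and> fst d' = u @ v \<and> snd d' = snd d)
   \<or> (\<exists>u1 u2 u3 a b c e ov. fst d = u1 @ [(a, ov), (b, ov)] @ u2 @ [(c, \<not> ov), (e, \<not> ov)] @ u3 \<and>
          {c, e} = {a, b} \<and> a \<noteq> b \<and> snd d a \<noteq> snd d b \<and>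
          fst d' = u1 @ u2 @ u3 \<and> snd d' = snd d)
   \<or> (\<exists>u1 u2 u3 u4 p1 p2 q1 q2 r1 r2.
          fst d = u1 @ [p1, p2] @ u2 @ [q1, q2] @ u3 @ [r1, r2] @ u4 \<and>
          fst d' = u1 @ [p2, p1] @ u2 @ [q2, q1] @ u3 @ [r2, r1] @ u4 \<and>
          r3_ok (snd d) {(p1, p2), (q1, q2), (r1, r2)} \<and> snd d' = snd d)"
    using g unfolding gmove_def by blast
  then show ?thesis
  proof (elim disjE exE conjE)
    assume "fst d' = rotate1 (fst d)"
    then show ?thesis using inv_rot1 inv_rot2 by metis
  next
    fix f assume "inj_on f (fst ` set (fst d))" "fst d' = map (\<lambda>(a, ov). (f a, ov)) (fst d)"
    then show ?thesis using inv_relab1 inv_relab2 by metis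
  next
    fix u v a ov assume "fst d = u @ [(a, ov), (a, \<not> ov)] @ v" "fst d' = u @ v"
    then show ?thesis using inv_r1_1 inv_r1_2 wf wf' by metis
  next
    fix u1 u2 u3 a b c e ov
    assume h: "fst d = u1 @ [(a, ov), (b, ov)] @ u2 @ [(c, \<not> ov), (e, \<not> ov)] @ u3"
      "{c, e} = {a, b}" "fst d' = u1 @ u2 @ u3"
    show ?thesis
    proof
      assume "Inv (fst d)" then show "Inv (fst d')" using inv_r2_1[OF _ h(2)] h wf' by metis
    next
      assume "Inv (fst d')" then show "Inv (fst d)" using inv_r2_2[OF _ h(2)] h wf by metis
    qed
  next
    fix u1 u2 u3 u4 p1 p2 q1 q2 r1 r2
    assume h: "fst d = u1 @ [p1, p2] @ u2 @ [q1, q2] @ u3 @ [r1, r2] @ u4"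
      "fst d' = u1 @ [p2, p1] @ u2 @ [q2, q1] @ u3 @ [r2, r1] @ u4"
      "r3_ok (snd d) {(p1, p2), (q1, q2), (r1, r2)}"
    obtain x y z oT oM oB where dx: "distinct [x, y, z]" and
      S: "{(p1, p2), (q1, q2), (r1, r2)} = {ordpair oT (x, True) (y, True), ordpair oM (x, False) (z, True),
          ordpair oB (y, False) (z, False)}"
      using h(3) unfolding r3_ok_def by blast
    have "{(p2, p1), (q2, q1), (r2, r1)} = prod.swap ` {(p1, p2), (q1, q2), (r1, r2)}" by simp
    also have "\<dots> = prod.swap ` {ordpair oT (x, True) (y, True), ordpair oM (x, False) (z, True),
          ordpair oB (y, False) (z, False)}" using S by simp
    also have "\<dots> = {ordpair (\<not> oT) (x, True) (y, True), ordpair (\<not> oM) (x, False) (z, True),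
          ordpair (\<not> oB) (y, False) (z, False)}" by (simp add: swap_ordpair)
    finally have S': "{(p2, p1), (q2, q1), (r2, r1)} = {ordpair (\<not> oT) (x, True) (y, True), ordpair (\<not> oM) (x, False) (z, True),
          ordpair (\<not> oB) (y, False) (z, False)}" .
    have d1: "distinct (u1 @ [p1, p2] @ u2 @ [q1, q2] @ u3 @ [r1, r2] @ u4)"
      using wf h(1) unfolding gauss_wf_def by simp
    have d2: "distinct (u1 @ [p2, p1] @ u2 @ [q2, q1] @ u3 @ [r2, r1] @ u4)"
      using wf' h(2) unfolding gauss_wf_def by simp
    show ?thesis
    proof
      assume "Inv (fst d)" then show "Inv (fst d')" using r3gen[OF d1 dx S] h by simp
    next
      assume "Inv (fst d')" then show "Inv (fst d)" using r3gen[OF d2 dx S'] h by simp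
    qed
  qed
qed

lemma gequiv_inv:
  assumes "gequiv d K"
  shows "Inv (fst d) = Inv (fst K)"
proof -
  have "(symclp gmove)\<^sup>*\<^sup>* d K" using assms unfolding gequiv_def equivclp_def .
  then show ?thesis
  proof (induction rule: rtranclp_induct)
    case base then show ?case by simp
  next
    case (step y z)
    then have "gmove y z \<or> gmove z y" unfolding symclp_def by simp
    then have "Inv (fst y) = Inv (fst z)" using gmove_inv by metis
    then show ?case using step.IH by simp
  qed
qed

lemma gequiv_wf:
  assumes "gequiv d K"
  shows "d = K \<or> gauss_wf (fst d)"
proof -
  have "(symclp gmove)\<^sup>*\<^sup>* d K" using assms unfolding gequiv_def equivclp_def .
  then show ?thesis
  proof (cases rule: converse_rtranclpE)
    case base then show ?thesis by simp
  next
    case (step z)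
    then have "gmove d z \<or> gmove z d" unfolding symclp_def by simp
    then show ?thesis unfolding gmove_def by blast
  qed
qed

lemma small2: "kop (kop c o1) o2 = c \<Longrightarrow>
   o1 \<in> {c, kop c o1} \<Longrightarrow> o2 \<in> {c, kop c o1} \<Longrightarrow> o1 = o2"
  by (cases c; cases o1; cases o2) (simp_all add: kop_def nc_def)

fun cu :: "(nat \<Rightarrow> col) \<Rightarrow> col \<Rightarrow> nat list \<Rightarrow> col set" where
  "cu oc c [] = {c}"
| "cu oc c (a # as) = insert c (cu oc (kop c (oc a)) as)"

definition unders :: "gword \<Rightarrow> nat list" where
  "unders w = map fst (filter (\<lambda>x. \<not> snd x) w)"

lemma fin_unders: "fin oc c w = foldl (\<lambda>p a. kop p (oc a)) c (unders w)"
  unfolding unders_def by (induction w arbitrary: c) auto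

lemma c_in_cu: "c \<in> cu oc c as"
  by (cases as) auto

lemma cols_unders: "cols oc c w = cu oc c (unders w)"
  unfolding unders_def
proof (induction w arbitrary: c)
  case (Cons x w)
  then show ?case by (cases x) (auto simp: c_in_cu)
qed simp

lemma small_lemma:
  assumes wf: "gauss_wf w" and lab: "fst ` set w \<subseteq> {0, 1, 2}"
  shows "\<not> Inv w"
proof
  assume "Inv w"
  then obtain oc c where col: "colouring oc c w" and nt: "\<exists>a\<in>fst ` set w. \<exists>b\<in>fst ` set w. oc a \<noteq> oc b"
    unfolding Inv_def by blast
  define us where "us = unders w"
  have labus: "fst ` set w = set us"
  proof
    show "fst ` set w \<subseteq> set us"
    proof
      fix a assume "a \<in> fst ` set w"
      then obtain x where "x \<in> set w" "a = fst x" by blast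
      then obtain ov where o: "(a, ov) \<in> set w" by (metis prod.collapse)
      moreover have "(a, \<not> ov) \<in> set w" using wf o unfolding gauss_wf_def by blast
      ultimately have "(a, False) \<in> set w" by (cases ov) auto
      then show "a \<in> set us" unfolding us_def unders_def by force
    qed
    show "set us \<subseteq> fst ` set w" unfolding us_def unders_def by auto
  qed
  have dus: "distinct us"
  proof -
    have "distinct (filter (\<lambda>x. \<not> snd x) w)" using wf unfolding gauss_wf_def by simp
    moreover have "inj_on fst (set (filter (\<lambda>x. \<not> snd x) w))"
      by (auto simp: inj_on_def prod_eq_iff)
    ultimately show ?thesis unfolding us_def unders_def by (simp add: distinct_map)
  qed
  have "length us = card (set us)" using dus by (simp add: distinct_card)
  also have "\<dots> \<le> card {0::nat, 1, 2}"
  proof (rule card_mono)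
    show "finite {0::nat, 1, 2}" by simp
    show "set us \<subseteq> {0, 1, 2}" using lab labus by blast
  qed
  finally have len: "length us \<le> 3" by simp
  have inc: "\<forall>a\<in>set us. oc a \<in> cu oc c us"
  proof
    fix a assume "a \<in> set us"
    then have "a \<in> fst ` set w" using labus by blast
    then obtain x where "x \<in> set w" "a = fst x" by blast
    then obtain ov where o: "(a, ov) \<in> set w" by (metis prod.collapse)
    moreover have "(a, \<not> ov) \<in> set w" using wf o unfolding gauss_wf_def by blast
    ultimately have "(a, True) \<in> set w" by (cases ov) auto
    then have "oc a \<in> cols oc c w" using over_in_cols col unfolding colouring_def by blast
    then show "oc a \<in> cu oc c us" using cols_unders us_def by simp
  qed
  have fu: "foldl (\<lambda>p a. kop p (oc a)) c us = c"
    using col fin_unders us_def unfolding colouring_def by simp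
  have alleq: "\<forall>a\<in>set us. \<forall>b\<in>set us. oc a = oc b"
  proof (cases us)
    case Nil then show ?thesis by simp
  next
    case (Cons a1 r1)
    show ?thesis
    proof (cases r1)
      case Nil then show ?thesis using Cons by simp
    next
      case (Cons a2 r2)
      show ?thesis
      proof (cases r2)
        case Nil
        have U: "us = [a1, a2]" using \<open>us = a1 # r1\<close> Cons Nil by simp
        have e: "kop (kop c (oc a1)) (oc a2) = c" using fu U by simp
        have cuq: "cu oc c us = {c, kop c (oc a1)}" using U e by auto
        have i1: "oc a1 \<in> cu oc c us" "oc a2 \<in> cu oc c us" using inc U by simp_all
        have "oc a1 = oc a2" using small2[OF e] i1 cuq by simp
        then show ?thesis using U by simp
      next
        case (Cons a3 r3)
        then have r3: "r3 = []" using len \<open>us = a1 # r1\<close> \<open>r1 = a2 # r2\<close> by simp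
        have U: "us = [a1, a2, a3]" using \<open>us = a1 # r1\<close> \<open>r1 = a2 # r2\<close> Cons r3 by simp
        have e: "kop (kop (kop c (oc a1)) (oc a2)) (oc a3) = c" using fu U by simp
        have cuq: "cu oc c us = {c, kop c (oc a1), kop (kop c (oc a1)) (oc a2)}" using U e by auto
        have i1: "oc a1 \<in> cu oc c us" "oc a2 \<in> cu oc c us" "oc a3 \<in> cu oc c us" using inc U by simp_all
        have "oc a1 = oc a2 \<and> oc a2 = oc a3" using small3[OF e] i1 cuq by simp
        then show ?thesis using U by simp
      qed
    qed
  qed
  moreover obtain a b where "a \<in> fst ` set w" "b \<in> fst ` set w" "oc a \<noteq> oc b" using nt by blast
  ultimately show False using labus by blast
qed

definition oc8 :: "nat \<Rightarrow> col" where
  "oc8 a = (if a = 1 then K0 else if a = 2 then K1 else if a = 3 then K2 else K3)"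

lemma inv_fig8: "Inv (fst figure_eight)"
proof -
  have "colouring oc8 K0 (fst figure_eight)"
    by (simp add: colouring_def figure_eight_def oc8_def kop_def nc_def)
  moreover have "(1::nat) \<in> fst ` set (fst figure_eight)" "(2::nat) \<in> fst ` set (fst figure_eight)"
    by (force simp: figure_eight_def)+
  moreover have "oc8 1 \<noteq> oc8 2" by (simp add: oc8_def)
  ultimately show ?thesis unfolding Inv_def by blast
qed

definition M4 :: "nat \<Rightarrow> nat \<Rightarrow> tile" where
  "M4 i j = (if j = 0 \<or> j = 2 then T9 else T10)"

definition P4 :: "hedge \<Rightarrow> hedge" where
  "P4 h = (if h = (0,2,S) then (0,3,S) else if h = (0,3,S) then (0,2,S)
     else if h = (0,2,N) then (0,0,W) else if h = (0,0,W) then (0,2,N)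
     else if h = (0,1,S) then (0,3,E) else if h = (0,3,E) then (0,1,S)
     else if h = (0,0,S) then (0,3,N) else if h = (0,3,N) then (0,0,S)
     else if h = (0,0,N) then (0,1,N) else if h = (0,1,N) then (0,0,N) else h)"

definition hs4 :: "hedge list" where
  "hs4 = [(0,0,N),(0,3,N),(0,2,S),(0,0,W),(0,1,W),(0,2,W),(0,3,W),(0,1,S)]"

lemma be14: "boundary_edges 1 4 = {(0,0,N),(0,1,N),(0,2,N),(0,3,N),(0,0,S),(0,1,S),(0,2,S),(0,3,S),(0,0,W),(0,3,E)}"
  unfolding boundary_edges_def by (auto simp: less_Suc_eq)

lemma all4: "(\<forall>j<(4::nat). Q j) \<longleftrightarrow> Q 0 \<and> Q 1 \<and> Q 2 \<and> Q 3"
  by (auto simp: less_Suc_eq numeral_eq_Suc)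
lemma all1: "(\<forall>i<(1::nat). Q i) \<longleftrightarrow> Q 0" by auto
lemma allside: "(\<forall>d. Q d) \<longleftrightarrow> Q N \<and> Q E \<and> Q S \<and> Q W"
  by (metis side.exhaust)

lemma vm: "virtual_mosaic 1 4 M4 P4"
  unfolding virtual_mosaic_def be14 all4 all1 allside
  apply (simp add: P4_def across_def be14 has_end_def M4_def)
  done
lemma bm: "((i, j, d) \<in> boundary_edges 1 4) \<longleftrightarrow> i = 0 \<and> j < 4 \<and> (d = N \<or> d = S \<or> (d = W \<and> j = 0) \<or> (d = E \<and> j = 3))"
  by (auto simp: boundary_edges_def)

lemma bm': "((i, j, d) \<in> boundary_edges (Suc 0) 4) \<longleftrightarrow> i = 0 \<and> j < 4 \<and> (d = N \<or> d = S \<or> (d = W \<and> j = 0) \<or> (d = E \<and> j = 3))"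
  using bm by simp

lemma steps:
  "step 1 4 M4 P4 (0,0,N) = (0,3,N)"
  "step 1 4 M4 P4 (0,3,N) = (0,2,S)"
  "step 1 4 M4 P4 (0,2,S) = (0,0,W)"
  "step 1 4 M4 P4 (0,0,W) = (0,1,W)"
  "step 1 4 M4 P4 (0,1,W) = (0,2,W)"
  "step 1 4 M4 P4 (0,2,W) = (0,3,W)"
  "step 1 4 M4 P4 (0,3,W) = (0,1,S)"
  "step 1 4 M4 P4 (0,1,S) = (0,0,N)"
  by (simp_all add: step_def exit_of_def across_def bm bm' P4_def M4_def)

lemma cyc8:
  assumes "f a0 = a1" "f a1 = a2" "f a2 = a3" "f a3 = a4" "f a4 = a5" "f a5 = a6" "f a6 = a7" "f a7 = a0"
  shows "\<forall>k<length [a0,a1,a2,a3,a4,a5,a6,a7]. [a0,a1,a2,a3,a4,a5,a6,a7] ! ((k + 1) mod length [a0,a1,a2,a3,a4,a5,a6,a7]) = f ([a0,a1,a2,a3,a4,a5,a6,a7] ! k)"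
proof -
  have l: "length [a0,a1,a2,a3,a4,a5,a6,a7] = 8" by simp
  show ?thesis unfolding l
  proof (intro allI impI)
    fix k :: nat assume "k < 8"
    then have "k = 0 \<or> k = 1 \<or> k = 2 \<or> k = 3 \<or> k = 4 \<or> k = 5 \<or> k = 6 \<or> k = 7" by linarith
    then show "[a0,a1,a2,a3,a4,a5,a6,a7] ! ((k + 1) mod 8) = f ([a0,a1,a2,a3,a4,a5,a6,a7] ! k)"
      using assms by (elim disjE) simp_all
  qed
qed

lemma kt: "knot_traversal 1 4 M4 P4 hs4"
  unfolding knot_traversal_def
proof (intro conjI)
  show "hs4 \<noteq> []" "distinct hs4" by (simp_all add: hs4_def)
  show "\<forall>h\<in>set hs4. case h of (i, j, d) \<Rightarrow> i < 1 \<and> j < 4 \<and> has_end M4 h"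
    by (simp add: hs4_def has_end_def M4_def)
  show "\<forall>k<length hs4. hs4 ! ((k + 1) mod length hs4) = step 1 4 M4 P4 (hs4 ! k)"
    unfolding hs4_def by (rule cyc8) (simp_all only: steps)
  show "\<forall>i<1. \<forall>j<4. \<forall>d. has_end M4 (i, j, d) \<longrightarrow>
        (i, j, d) \<in> set hs4 \<or> (\<exists>h\<in>set hs4. exit_of M4 h = (i, j, d))"
    unfolding all4 all1 allside by (simp add: hs4_def has_end_def exit_of_def M4_def)
qed
definition f4 :: "nat \<Rightarrow> nat" where
  "f4 a = (if a = 0 then 1 else if a = 1 then 4 else if a = 2 then 3 else 2)"

lemma mg: "mosaic_gauss 4 M4 hs4 = ([(0, True), (3, False), (2, True), (0, False), (1, True), (2, False), (3, True), (1, False)], mosaic_sign 4 M4 hs4)"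
  by (simp add: mosaic_gauss_def hs4_def passage_def M4_def)

lemma ge: "gequiv (mosaic_gauss 4 M4 hs4) figure_eight"
  unfolding gequiv_def
proof (rule r_into_equivclp)
  show "gmove (mosaic_gauss 4 M4 hs4) figure_eight"
    unfolding gmove_def mg
    apply (rule conjI)
    apply (simp add: gauss_wf_def)
    apply (rule conjI)
    apply (simp add: gauss_wf_def figure_eight_def)
    apply (rule disjI2, rule disjI1)
    apply (rule exI[of _ f4])
    apply (simp add: figure_eight_def f4_def mosaic_sign_def hs4_def M4_def inj_on_def)
    done
qed

lemma rep: "mosaic_represents 1 4 M4 P4 figure_eight"
  unfolding mosaic_represents_def using vm kt ge by blast

lemma passage_lab:
  assumes "h \<in> set hs" "\<forall>h\<in>set hs. case h of (i, j, d) \<Rightarrow> i < m \<and> j < n \<and> has_end M h"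
    "x \<in> set (passage n M h)"
  shows "fst x < m * n"
proof -
  obtain i j d where h: "h = (i, j, d)" by (cases h) auto
  have ij: "i < m" "j < n" using assms(1,2) h by auto
  have fx: "fst x = i * n + j" using assms(3) h by (auto simp: passage_def split: if_splits)
  have "i * n + j < i * n + n" using ij by simp
  also have "\<dots> = (i + 1) * n" by simp
  also have "\<dots> \<le> m * n" using ij by (intro mult_le_mono1) simp
  finally show ?thesis using fx by simp
qed

lemma no_small:
  assumes rep: "mosaic_represents m n M P figure_eight" and small: "m * n \<le> 3"
  shows False
proof -
  obtain hs where kt: "knot_traversal m n M P hs" and ge: "gequiv (mosaic_gauss n M hs) figure_eight"
    using rep unfolding mosaic_represents_def by blast
  define w where "w = concat (map (passage n M) hs)"
  have fw: "fst (mosaic_gauss n M hs) = w" unfolding mosaic_gauss_def w_def by simp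
  have bnd: "\<forall>h\<in>set hs. case h of (i, j, d) \<Rightarrow> i < m \<and> j < n \<and> has_end M h"
    using kt unfolding knot_traversal_def by blast
  have labs: "\<forall>x\<in>set w. fst x < m * n"
  proof
    fix x assume "x \<in> set w"
    then obtain h where "h \<in> set hs" "x \<in> set (passage n M h)" unfolding w_def by auto
    then show "fst x < m * n" using passage_lab bnd by blast
  qed
  have lab3: "fst ` set w \<subseteq> {0, 1, 2}"
  proof
    fix y assume "y \<in> fst ` set w"
    then obtain x where "x \<in> set w" "y = fst x" by blast
    then have "y < 3" using labs small by (metis order_less_le_trans)
    then show "y \<in> {0, 1, 2}" by auto
  qed
  have I: "Inv w" using gequiv_inv[OF ge] inv_fig8 fw by simp
  show False
  proof (cases "mosaic_gauss n M hs = figure_eight")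
    case True
    then have "w = fst figure_eight" using fw by simp
    then have "(4::nat, True) \<in> set w" by (simp add: figure_eight_def)
    then have "fst (4::nat, True) < m * n" using labs by blast
    then show False using small by simp
  next
    case False
    then have "gauss_wf w" using gequiv_wf[OF ge] fw by simp
    then show False using small_lemma lab3 I by blast
  qed
qed

theorem mainTheorem1:
  shows "tile_number figure_eight = 4 \<and> (\<exists>M P. mosaic_represents 1 4 M P figure_eight)"
proof
  show ex: "\<exists>M P. mosaic_represents 1 4 M P figure_eight" using rep by blast
  show "tile_number figure_eight = 4"
    unfolding tile_number_def
  proof (rule Least_equality)
    show "\<exists>m n M P. m * n = 4 \<and> mosaic_represents m n M P figure_eight"
      using rep by (intro exI[of _ 1] exI[of _ 4]) auto
  next
    fix t assume "\<exists>m n M P. m * n = t \<and> mosaic_represents m n M P figure_eight"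
    then obtain m n M P where "m * n = t" "mosaic_represents m n M P figure_eight" by blast
    then show "4 \<le> t"
    proof -
      assume mt: "m * n = t" and r: "mosaic_represents m n M P figure_eight"
      show "4 \<le> t"
      proof (rule ccontr)
        assume "\<not> 4 \<le> t"
        then have "m * n \<le> 3" using mt by simp
        then show False using no_small r by blast
      qed
    qed
  qed
qed

end
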